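(* The automorphism group $\Gamma(S)$ of the separation relation $S$ on $\mathbb Q\times\mathbb Z$ consists exactly of \begin{itemize} \item all positive permutations of $\mathbb Q\times\mathbb Z$ that initiate a permutation $h$ of $\mathbb Q$ of rotation type, and \item all negative permutations of $\mathbb Q\times\mathbb Z$ that initiate a permutation $h$ of $\mathbb Q$ of reflection type. \end{itemize}
   Context: $\mathbb Q\times\mathbb Z$ denotes the set $\mathbb Q\times\mathbb Z$ with the lexicographic order: $(r,z)<(r',z')$ iff $r<r'$, or $r=r'$ and $z<z'$. Relations defined by order formulas are interpreted on $\mathbb Q\times\mathbb Z$ by the same formulas: $B(a,b,c)\iff(a<b<c)\vee(a>b>c)$ and $S(a,b,c,d)\iff(B(a,b,c)\vee B(a,d,c))\wedge(B(b,a,d)\vee B(b,c,d))$; $\Gamma(R)$ is the group of permutations of $\mathbb Q\times\mathbb Z$ preserving $R$. A vertical is a set $\{r\}\times\mathbb Z$. A permutation $g$ is systemic if it maps every vertical onto a vertical; it initiates the permutation $h$ of $\mathbb Q$ with $g(\{a\}\times\mathbb Z)=\{h(a)\}\times\mathbb Z$. A systemic permutation is positive if it preserves the order on each vertical and negative if it reverses the order on each vertical. A section of $\mathbb Q$ is a pair $\{I_1,I_2\}$ with $I_1\cup I_2=\mathbb Q$, $I_1\cap I_2=\emptyset$, and $a<b$ for all $a\in I_1,b\in I_2$ (one of them may be empty). A permutation $h$ of $\mathbb Q$ is of rotation type if for some section $\{I_1,I_2\}$, $h$ is increasing on $I_1$ and on $I_2$ and $h(a)>h(b)$ for all $a\in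 I_1$, $b\in I_2$; it is of reflection type if for some section $\{I_1,I_2\}$, $h$ is decreasing on $I_1$ and on $I_2$ and $h(a)<h(b)$ for all $a\in I_1$, $b\in I_2$. (The automorphism group of $\langle\mathbb Q,S\rangle$ is the set of permutations of $\mathbb Q$ of rotation or reflection type.) *)

theory Defs
  imports Complex_Main
begin

type_synonym qz = "rat \<times> int"

definition qz_less :: "qz \<Rightarrow> qz \<Rightarrow> bool" where
  "qz_less p q \<longleftrightarrow> fst p < fst q \<or> (fst p = fst q \<and> snd p < snd q)"

definition Btw :: "qz \<Rightarrow> qz \<Rightarrow> qz \<Rightarrow> bool" where
  "Btw a b c \<longleftrightarrow> (qz_less a b \<and> qz_less b c) \<or> (qz_less b a \<and> qz_less c b)"

definition Sep :: "qz \<Rightarrow> qz \<Rightarrow> qz \<Rightarrow> qz \<Rightarrow> bool" where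
  "Sep a b c d \<longleftrightarrow> (Btw a b c \<or> Btw a d c) \<and> (Btw b a d \<or> Btw b c d)"

definition Gamma_Sep :: "(qz \<Rightarrow> qz) set" where
  "Gamma_Sep = {g. bij g \<and>
     (\<forall>a b c d. Sep a b c d \<longleftrightarrow> Sep (g a) (g b) (g c) (g d))}"

definition vertical :: "rat \<Rightarrow> qz set" where
  "vertical r = {r} \<times> UNIV"

definition systemic :: "(qz \<Rightarrow> qz) \<Rightarrow> bool" where
  "systemic g \<longleftrightarrow> (\<forall>r. \<exists>r'. g ` vertical r = vertical r')"

definition initiates :: "(qz \<Rightarrow> qz) \<Rightarrow> (rat \<Rightarrow> rat) \<Rightarrow> bool" where
  "initiates g h \<longleftrightarrow> systemic g \<and> (\<forall>a. g ` vertical a = vertical (h a))"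

definition positive :: "(qz \<Rightarrow> qz) \<Rightarrow> bool" where
  "positive g \<longleftrightarrow> systemic g \<and>
     (\<forall>r z z'. z < z' \<longrightarrow> qz_less (g (r, z)) (g (r, z')))"

definition negative :: "(qz \<Rightarrow> qz) \<Rightarrow> bool" where
  "negative g \<longleftrightarrow> systemic g \<and>
     (\<forall>r z z'. z < z' \<longrightarrow> qz_less (g (r, z')) (g (r, z)))"

text \<open>A section {I1, I2} of Q, with I1 the lower part (either may be empty).\<close>
definition is_section :: "rat set \<Rightarrow> rat set \<Rightarrow> bool" where
  "is_section I1 I2 \<longleftrightarrow> I1 \<union> I2 = UNIV \<and> I1 \<inter> I2 = {} \<and>
     (\<forall>a\<in>I1. \<forall>b\<in>I2. a < b)"

definition rotation_type :: "(rat \<Rightarrow> rat) \<Rightarrow> bool" where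
  "rotation_type h \<longleftrightarrow> bij h \<and> (\<exists>I1 I2. is_section I1 I2 \<and>
     strict_mono_on I1 h \<and> strict_mono_on I2 h \<and>
     (\<forall>a\<in>I1. \<forall>b\<in>I2. h a > h b))"

definition reflection_type :: "(rat \<Rightarrow> rat) \<Rightarrow> bool" where
  "reflection_type h \<longleftrightarrow> bij h \<and> (\<exists>I1 I2. is_section I1 I2 \<and>
     strict_antimono_on I1 h \<and> strict_antimono_on I2 h \<and>
     (\<forall>a\<in>I1. \<forall>b\<in>I2. h a < h b))"

end

theory Submission imports Defs "HOL-Library.Product_Lexorder" begin


definition cyc :: "'a::linorder \<Rightarrow> 'a \<Rightarrow> 'a \<Rightarrow> bool" where
  "cyc x y z \<longleftrightarrow> (x<y \<and> y<z) \<or> (y<z \<and> z<x) \<or> (z<x \<and> x<y)"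
definition btw :: "'a::linorder \<Rightarrow> 'a \<Rightarrow> 'a \<Rightarrow> bool" where
  "btw a b c \<longleftrightarrow> (a<b \<and> b<c) \<or> (b<a \<and> c<b)"
definition sep :: "'a::linorder \<Rightarrow> 'a \<Rightarrow> 'a \<Rightarrow> 'a \<Rightarrow> bool" where
  "sep a b c d \<longleftrightarrow> (btw a b c \<or> btw a d c) \<and> (btw b a d \<or> btw b c d)"

lemma qz_less_eq: "qz_less p q \<longleftrightarrow> p < q"
  by (cases p; cases q) (auto simp: qz_less_def less_prod_def)

lemma Sep_eq: "Sep = sep"
  by (intro ext) (simp add: Sep_def sep_def Btw_def btw_def qz_less_eq)

lemma sep_distinct: "sep a b c d \<Longrightarrow> distinct [a,b,c,d]"
  unfolding sep_def btw_def by auto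

lemma sep_cyc: "distinct [a,b,c,d::'a::linorder] \<Longrightarrow> sep a b c d \<longleftrightarrow> (cyc a c b \<noteq> cyc a c d)"
  unfolding sep_def btw_def cyc_def
  by (simp add: neq_iff) (smt (verit) order.strict_trans not_less_iff_gr_or_eq)

lemma cyc_rot: "cyc x y z \<longleftrightarrow> cyc y z x"
  unfolding cyc_def by auto

lemma cyc_swap: "distinct [x,y,z] \<Longrightarrow> cyc x z y \<longleftrightarrow> \<not> cyc x y z"
  unfolding cyc_def by auto

definition pres :: "('a::linorder \<Rightarrow> 'b::linorder) \<Rightarrow> bool" where
  "pres g \<longleftrightarrow> (\<forall>x y z. distinct [x,y,z] \<longrightarrow> (cyc x y z \<longleftrightarrow> cyc (g x) (g y) (g z)))"
definition revs :: "('a::linorder \<Rightarrow> 'b::linorder) \<Rightarrow> bool" where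
  "revs g \<longleftrightarrow> (\<forall>x y z. distinct [x,y,z] \<longrightarrow> (cyc x y z \<longleftrightarrow> \<not> cyc (g x) (g y) (g z)))"

lemma pres_revs_sep:
  assumes inj: "inj g" and pr: "pres g \<or> revs g"
  shows "sep a b c d \<longleftrightarrow> sep (g a) (g b) (g c) (g d)"
proof (cases "distinct [a,b,c,d]")
  case False
  hence "\<not> distinct [g a, g b, g c, g d]" using inj by (auto dest: injD)
  with False show ?thesis using sep_distinct[of a b c d] sep_distinct[of "g a" "g b" "g c" "g d"] by blast
next
  case True
  hence D: "distinct [g a, g b, g c, g d]" using inj by (auto simp: inj_eq)
  have e1: "sep a b c d \<longleftrightarrow> (cyc a c b \<noteq> cyc a c d)" using True sep_cyc by blast
  have e2: "sep (g a) (g b) (g c) (g d) \<longleftrightarrow> (cyc (g a) (g c) (g b) \<noteq> cyc (g a) (g c) (g d))"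
    using D sep_cyc by blast
  have d1: "distinct [a,c,b]" "distinct [a,c,d]" using True by auto
  show ?thesis using pr d1 unfolding e1 e2 pres_def revs_def by metis
qed

lemma sep_pres_revs:
  fixes g :: "'a::linorder \<Rightarrow> 'b::linorder"
  assumes inj: "inj g" and S: "\<And>a b c d. sep a b c d \<longleftrightarrow> sep (g a) (g b) (g c) (g d)"
    and inf: "infinite (UNIV :: 'a set)"
  shows "pres g \<or> revs g"
proof -
  define \<sigma> where "\<sigma> x y z = (cyc x y z \<longleftrightarrow> cyc (g x) (g y) (g z))" for x y z
  have L1: "\<sigma> a b c = \<sigma> a b d" if "distinct [a,b,c,d]" for a b c d
  proof -
    have D: "distinct [g a, g b, g c, g d]" using that inj by (auto simp: inj_eq)
    have "sep a c b d \<longleftrightarrow> (cyc a b c \<noteq> cyc a b d)" using that sep_cyc[of a c b d] by auto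
    moreover have "sep (g a) (g c) (g b) (g d) \<longleftrightarrow> (cyc (g a) (g b) (g c) \<noteq> cyc (g a) (g b) (g d))"
      using D sep_cyc[of "g a" "g c" "g b" "g d"] by auto
    ultimately show ?thesis using S[of a c b d] unfolding \<sigma>_def by blast
  qed
  have R: "\<sigma> x y z = \<sigma> y z x" for x y z unfolding \<sigma>_def by (simp only: cyc_rot[of x y z] cyc_rot[of "g x" "g y" "g z"])
  have L2: "\<sigma> d b c = \<sigma> a b c" if "distinct [a,b,c,d]" for a b c d
  proof -
    have "distinct [b,c,a,d]" using that by auto
    hence "\<sigma> b c a = \<sigma> b c d" by (rule L1)
    have "\<sigma> d b c = \<sigma> b c d" by (rule R)
    also have "\<dots> = \<sigma> b c a" using \<open>\<sigma> b c a = \<sigma> b c d\<close> by (rule sym)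
    also have "\<dots> = \<sigma> a b c" by (rule R[symmetric])
    finally show ?thesis .
  qed
  have L3: "\<sigma> a d c = \<sigma> a b c" if "distinct [a,b,c,d]" for a b c d
  proof -
    have "distinct [c,a,b,d]" using that by auto
    hence "\<sigma> c a b = \<sigma> c a d" by (rule L1)
    have "\<sigma> a d c = \<sigma> d c a" by (rule R)
    also have "\<dots> = \<sigma> c a d" by (rule R)
    also have "\<dots> = \<sigma> c a b" using \<open>\<sigma> c a b = \<sigma> c a d\<close> by (rule sym)
    also have "\<dots> = \<sigma> b c a" by (rule R[symmetric])
    also have "\<dots> = \<sigma> a b c" by (rule R[symmetric])
    finally show ?thesis .
  qed
  have all: "\<sigma> a b c = \<sigma> x y z" if "distinct [a,b,c]" "distinct [x,y,z]" for a b c x y z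
  proof -
    obtain w1 where w1: "w1 \<notin> {a,b,c,x,y,z}" using ex_new_if_finite[OF inf, of "{a,b,c,x,y,z}"] by auto
    obtain w2 where w2: "w2 \<notin> {a,b,c,x,y,z,w1}" using ex_new_if_finite[OF inf, of "{a,b,c,x,y,z,w1}"] by auto
    obtain w3 where w3: "w3 \<notin> {a,b,c,x,y,z,w1,w2}" using ex_new_if_finite[OF inf, of "{a,b,c,x,y,z,w1,w2}"] by auto
    have d1: "distinct [a,b,c,w1]" using that w1 by auto
    have d2: "distinct [a,b,w1,w2]" using that w1 w2 by auto
    have d3: "distinct [a,w2,w1,w3]" using that w1 w2 w3 by auto
    have d4: "distinct [x,w2,w1,w3]" using that w1 w2 w3 by auto
    have d5: "distinct [x,y,w1,w2]" using that w1 w2 by auto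
    have d6: "distinct [x,y,z,w1]" using that w1 by auto
    note e1 = L1[OF d1] and e2 = L3[OF d2] and e3 = L2[OF d3] and e4 = L2[OF d4]
      and e5 = L3[OF d5] and e6 = L1[OF d6]
    show ?thesis using e1 e2[symmetric] e3[symmetric] e4 e5 e6 by simp
  qed
  show ?thesis
  proof (cases "\<forall>x y z. distinct [x,y,z] \<longrightarrow> \<sigma> x y z")
    case True thus ?thesis unfolding pres_def \<sigma>_def by blast
  next
    case False
    then obtain a b c where "distinct [a,b,c]" "\<not> \<sigma> a b c" by blast
    hence "\<forall>x y z. distinct [x,y,z] \<longrightarrow> \<not> \<sigma> x y z" using all by blast
    thus ?thesis unfolding revs_def \<sigma>_def by blast
  qed
qed

definition rotform :: "'a::linorder set \<Rightarrow> ('a \<Rightarrow> 'b::linorder) \<Rightarrow> bool" where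
  "rotform I g \<longleftrightarrow> (\<forall>x y. x < y \<longrightarrow> y \<in> I \<longrightarrow> x \<in> I) \<and> strict_mono_on I g \<and>
     strict_mono_on (- I) g \<and> (\<forall>a\<in>I. \<forall>b. b \<notin> I \<longrightarrow> g b < g a)"

lemma rotformD:
  assumes r: "rotform I g"
  shows "\<And>x y. x < y \<Longrightarrow> y \<in> I \<Longrightarrow> x \<in> I"
   and "\<And>x y. x < y \<Longrightarrow> x \<in> I \<Longrightarrow> y \<in> I \<Longrightarrow> g x < g y"
   and "\<And>x y. x < y \<Longrightarrow> x \<notin> I \<Longrightarrow> y \<notin> I \<Longrightarrow> g x < g y"
   and "\<And>a b. a \<in> I \<Longrightarrow> b \<notin> I \<Longrightarrow> g b < g a"
  using r unfolding rotform_def by (auto dest: strict_mono_onD)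

lemma pres_rotform:
  assumes inj: "inj g" and p: "pres g"
  shows "\<exists>I. rotform I g"
proof -
  define I where "I = {x. \<exists>y. x < y \<and> g y < g x}"
  have C: "cyc (g x) (g y) (g z)" if "x < y" "y < z" for x y z
  proof -
    have "cyc x y z" "distinct [x,y,z]" using that unfolding cyc_def by auto
    thus ?thesis using p unfolding pres_def by blast
  qed
  have ne: "g x \<noteq> g y" if "x \<noteq> y" for x y using inj that by (auto simp: inj_eq)
  have low: "x \<in> I" if "x < y" "y \<in> I" for x y
  proof -
    from that obtain w where w: "y < w" "g w < g y" unfolding I_def by auto
    have "cyc (g x) (g y) (g w)" using C that w by auto
    hence "g w < g x" using w unfolding cyc_def by auto
    thus ?thesis unfolding I_def using that w by (blast intro: less_trans)
  qed
  have m1: "g x < g y" if "x < y" "x \<in> I" "y \<in> I" for x y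
  proof -
    from that obtain w where w: "y < w" "g w < g y" unfolding I_def by auto
    have "cyc (g x) (g y) (g w)" using C that w by auto
    thus ?thesis using w unfolding cyc_def by auto
  qed
  have m2: "g x < g y" if "x < y" "x \<notin> I" for x y
  proof -
    have "\<not> g y < g x" using that unfolding I_def by auto
    moreover have "g x \<noteq> g y" using ne[of x y] that by auto
    ultimately show ?thesis by auto
  qed
  have cr: "g b < g a" if "a \<in> I" "b \<notin> I" for a b
  proof -
    have ab: "a < b" using low that by (metis linorder_neqE)
    from that obtain w where w: "a < w" "g w < g a" unfolding I_def by auto
    show ?thesis
    proof (rule ccontr)
      assume "\<not> g b < g a"
      moreover have "g a \<noteq> g b" using ne[of a b] ab by blast
      ultimately have ga: "g a < g b" by (meson linorder_neqE)
      consider "w = b" | "b < w" | "w < b" by fastforce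
      thus False
      proof cases
        case 1 thus False using w ga by auto
      next
        case 2 thus False using m2[of b w] that w ga by auto
      next
        case 3
        have "cyc (g a) (g w) (g b)" using C w 3 by auto
        thus False using w ga unfolding cyc_def by auto
      qed
    qed
  qed
  have "rotform I g" unfolding rotform_def
    using low m1 m2 cr by (auto intro!: strict_mono_onI)
  thus ?thesis by blast
qed

lemma rotform_pres:
  assumes r: "rotform I g"
  shows "pres g"
proof -
  have low: "\<And>x y. x < y \<Longrightarrow> y \<in> I \<Longrightarrow> x \<in> I"
   and m1: "\<And>x y. x < y \<Longrightarrow> x \<in> I \<Longrightarrow> y \<in> I \<Longrightarrow> g x < g y"
   and m2: "\<And>x y. x < y \<Longrightarrow> x \<notin> I \<Longrightarrow> y \<notin> I \<Longrightarrow> g x < g y"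
   and cr: "\<And>a b. a \<in> I \<Longrightarrow> b \<notin> I \<Longrightarrow> g b < g a"
    using r unfolding rotform_def by (auto dest: strict_mono_onD)
  have inc: "cyc (g x) (g y) (g z)" if "x < y" "y < z" for x y z
  proof -
    consider "z \<in> I" | "z \<notin> I" "y \<in> I" | "y \<notin> I" "x \<in> I" | "x \<notin> I" by blast
    thus ?thesis
    proof cases
      case 1
      hence "y \<in> I" "x \<in> I" using low that by blast+
      hence "g x < g y" "g y < g z" using m1 that 1 by blast+
      thus ?thesis unfolding cyc_def by blast
    next
      case 2
      hence "x \<in> I" using low that by blast
      hence "g x < g y" "g z < g x" using m1 cr that 2 by blast+
      thus ?thesis unfolding cyc_def by blast
    next
      case 3
      hence "z \<notin> I" using low that by blast
      hence "g y < g z" "g z < g x" using m2 cr that 3 by blast+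
      thus ?thesis unfolding cyc_def by blast
    next
      case 4
      hence "y \<notin> I" "z \<notin> I" using low that by blast+
      hence "g x < g y" "g y < g z" using m2 that 4 by blast+
      thus ?thesis unfolding cyc_def by blast
    qed
  qed
  have fw: "cyc (g x) (g y) (g z)" if c: "cyc x y z" for x y z
  proof -
    consider "x < y" "y < z" | "y < z" "z < x" | "z < x" "x < y" using c unfolding cyc_def by blast
    thus ?thesis using inc cyc_rot by metis
  qed
  show ?thesis unfolding pres_def
  proof (intro allI impI iffI)
    fix x y z :: 'a assume "distinct [x,y,z]" "cyc (g x) (g y) (g z)"
    show "cyc x y z"
    proof (rule ccontr)
      assume "\<not> cyc x y z"
      hence "cyc x z y" using cyc_swap \<open>distinct [x,y,z]\<close> by blast
      hence "cyc (g x) (g z) (g y)" by (rule fw)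
      thus False using \<open>cyc (g x) (g y) (g z)\<close> unfolding cyc_def by auto
    qed
  qed (rule fw)
qed



lemma succ_qz:
  fixes a b :: qz
  assumes ab: "a < b" and nb: "\<not>(\<exists>c. a < c \<and> c < b)"
  shows "b = (fst a, snd a + 1)"
proof (rule ccontr)
  obtain r z where a: "a = (r,z)" by force
  obtain s t where b: "b = (s,t)" by force
  assume ne: "b \<noteq> (fst a, snd a + 1)"
  have 1: "(r,z) < (r,z+1)" by (simp add: less_prod_def)
  have "(r,z+1) < (s,t)" using ab ne a b by (auto simp: less_prod_def)
  thus False using nb a b 1 by blast
qed

lemma int_step:
  fixes P :: "int \<Rightarrow> bool"
  assumes "P z" "\<not> P z'" "z < z'"
  shows "\<exists>k. P k \<and> \<not> P (k+1)"
proof (rule ccontr)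
  assume "\<not> ?thesis"
  hence st: "P k \<Longrightarrow> P (k+1)" for k by blast
  have "P (z + int n)" for n
  proof (induction n)
    case 0 thus ?case using assms(1) by simp
  next
    case (Suc n) thus ?case using st[OF Suc.IH] by (simp add: ac_simps)
  qed
  from this[of "nat (z' - z)"] show False using assms by simp
qed

lemma rot_qz:
  fixes f :: "qz \<Rightarrow> qz"
  assumes bij: "bij f" and r: "rotform I f"
  shows "positive f \<and> (\<exists>h. initiates f h \<and> rotation_type h)"
proof -
  have low: "\<And>x y. x < y \<Longrightarrow> y \<in> I \<Longrightarrow> x \<in> I"
   and m1: "\<And>x y. x < y \<Longrightarrow> x \<in> I \<Longrightarrow> y \<in> I \<Longrightarrow> f x < f y"
   and m2: "\<And>x y. x < y \<Longrightarrow> x \<notin> I \<Longrightarrow> y \<notin> I \<Longrightarrow> f x < f y"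
   and cr: "\<And>a b. a \<in> I \<Longrightarrow> b \<notin> I \<Longrightarrow> f b < f a"
    using rotformD[OF r] by blast+
  have inj: "inj f" and surj: "surj f" using bij_is_inj[OF bij] bij_is_surj[OF bij] by auto
  have ord: "x < y \<longleftrightarrow> f x < f y" if s: "x \<in> I \<longleftrightarrow> y \<in> I" for x y
  proof
    assume "x<y" thus "f x < f y" using m1 m2 s by blast
  next
    assume fxy: "f x < f y"
    show "x < y"
    proof (rule ccontr)
      assume "\<not> x < y"
      hence "y < x \<or> y = x" by auto
      thus False
      proof
        assume "y < x" hence "f y < f x" using m1 m2 s by blast
        thus False using fxy by simp
      next
        assume "y = x" thus False using fxy by simp
      qed
    qed
  qed
  have vert: "(r,z) \<in> I \<longleftrightarrow> (r,z') \<in> I" for r z z'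
  proof -
    have "\<not> ((r,u) \<in> I \<and> (r,v) \<notin> I)" for u v
    proof
      assume uv: "(r,u) \<in> I \<and> (r,v) \<notin> I"
      have "u \<noteq> v" using uv by auto
      have "u < v"
      proof (rule ccontr)
        assume "\<not> u<v" hence "v < u" using \<open>u \<noteq> v\<close> by simp
        hence "(r,v) < (r,u)" by (simp add: less_prod_def)
        thus False using low uv by blast
      qed
      then obtain k where k: "(r,k) \<in> I" "(r,k+1) \<notin> I"
        using int_step[of "\<lambda>k. (r,k) \<in> I" u v] uv by blast
      define m where "m = f (r,k+1)"
      have mle: "m \<le> y" for y
      proof -
        obtain x where x: "y = f x" using surj by (metis surjD)
        show ?thesis
        proof (cases "x \<in> I")
          case True thus ?thesis using cr[OF True k(2)] x m_def by simp
        next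
          case False
          have "\<not> x < (r,k+1)"
          proof
            assume "x < (r,k+1)"
            hence "x < (r,k) \<or> x = (r,k)" by (cases x) (auto simp: less_prod_def)
            hence "x \<in> I" using low k by blast
            thus False using False by simp
          qed
          hence "(r,k+1) < x \<or> x = (r,k+1)" by auto
          thus ?thesis using ord[of "(r,k+1)" x] False k x m_def by auto
        qed
      qed
      have "(fst m, snd m - 1) < m" by (simp add: less_prod_def)
      thus False using mle[of "(fst m, snd m - 1)"] by simp
    qed
    thus ?thesis by blast
  qed
  have step: "f (r, z+1) = (fst (f (r,z)), snd (f (r,z)) + 1)" for r z
  proof (rule succ_qz)
    have s: "(r,z) \<in> I \<longleftrightarrow> (r,z+1) \<in> I" using vert by blast
    show "f (r,z) < f (r,z+1)" using ord[OF s] by (simp add: less_prod_def)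
    show "\<not> (\<exists>c. f (r,z) < c \<and> c < f (r,z+1))"
    proof
      assume "\<exists>c. f (r,z) < c \<and> c < f (r,z+1)"
      then obtain w where w: "f (r,z) < f w" "f w < f (r,z+1)" using surj by (metis surjD)
      show False
      proof (cases "w \<in> I \<longleftrightarrow> (r,z) \<in> I")
        case True
        hence "(r,z) < w" "w < (r,z+1)" using ord w s by auto
        thus False by (cases w) (auto simp: less_prod_def)
      next
        case False
        show False
        proof (cases "(r,z) \<in> I")
          case True
          hence "f w < f (r,z)" using cr False by blast
          thus False using w by simp
        next
          case f2: False
          hence "f (r,z+1) < f w" using cr False s by blast
          thus False using w by simp
        qed
      qed
    qed
  qed
  have form: "f (r, z) = (fst (f (r,0)), snd (f (r,0)) + z)" for r z
  proof (induction z rule: int_induct[where k=0])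
    case base show ?case by simp
  next
    case (step1 i) thus ?case using step[of r i] by simp
  next
    case (step2 i)
    have "f (r, i) = f (r, (i-1)+1)" by simp
    also have "\<dots> = (fst (f (r,i-1)), snd (f (r,i-1)) + 1)" by (rule step)
    finally have "f (r, i - 1) = (fst (f (r,i)), snd (f (r,i)) - 1)" by (simp add: prod_eq_iff)
    with step2 show ?case by (simp add: prod_eq_iff)
  qed
  define h where "h r = fst (f (r,0))" for r
  have fst_f: "fst (f p) = h (fst p)" for p
    using form[of "fst p" "snd p"] by (cases p) (simp add: h_def)
  have img: "f ` vertical a = vertical (h a)" for a
  proof
    show "f ` vertical a \<subseteq> vertical (h a)"
    proof
      fix y assume "y \<in> f ` vertical a"
      then obtain z where "y = f (a,z)" by (auto simp: vertical_def)
      hence "fst y = h a" using fst_f[of "(a,z)"] by simp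
      thus "y \<in> vertical (h a)" by (cases y) (simp add: vertical_def)
    qed
    show "vertical (h a) \<subseteq> f ` vertical a"
    proof
      fix p assume "p \<in> vertical (h a)"
      hence p: "p = (h a, snd p)" by (cases p) (auto simp: vertical_def)
      have "f (a, snd p - snd (f (a,0))) = p"
        using form[of a "snd p - snd (f (a,0))"] p h_def by (simp add: prod_eq_iff)
      moreover have "(a, snd p - snd (f (a,0))) \<in> vertical a" by (simp add: vertical_def)
      ultimately show "p \<in> f ` vertical a" by (metis imageI)
    qed
  qed
  have sys: "systemic f" unfolding systemic_def using img by blast
  have pos: "positive f"
    unfolding positive_def qz_less_eq
  proof (intro conjI sys allI impI)
    fix r and z z' :: int assume "z < z'"
    moreover have "(r,z) \<in> I \<longleftrightarrow> (r,z') \<in> I" using vert by blast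
    moreover have "(r,z) < (r,z')" using \<open>z < z'\<close> by (simp add: less_prod_def)
    ultimately show "f (r,z) < f (r,z')" using ord by blast
  qed
  have ini: "initiates f h" unfolding initiates_def using sys img by blast
  have injh: "inj h"
  proof (rule injI)
    fix a b assume e: "h a = h b"
    have "f (a,0) = f (b, snd (f (a,0)) - snd (f (b,0)))"
      using form[of b "snd (f (a,0)) - snd (f (b,0))"] e h_def by (simp add: prod_eq_iff)
    hence "(a,0) = (b, snd (f (a,0)) - snd (f (b,0)))" using inj by (simp add: inj_eq)
    thus "a = b" by simp
  qed
  have surjh: "surj h"
  proof -
    have "s \<in> range h" for s
    proof -
      obtain x where "(s,0) = f x" using surj by (metis surjD)
      hence "s = h (fst x)" using fst_f by (metis fst_conv)
      thus ?thesis by blast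
    qed
    thus ?thesis by blast
  qed
  define J1 where "J1 = {r. (r,0) \<in> I}"
  have inJ: "p \<in> I \<longleftrightarrow> fst p \<in> J1" for p
    using vert[of "fst p" "snd p" 0] by (cases p) (simp add: J1_def)
  have sec: "is_section J1 (-J1)" unfolding is_section_def
  proof (intro conjI ballI)
    fix a b assume a: "a \<in> J1" and b: "b \<in> - J1"
    show "a < b"
    proof (rule ccontr)
      assume "\<not> a < b"
      moreover have "a \<noteq> b" using a b by auto
      ultimately have "(b,0) < (a,0)" by (simp add: less_prod_def)
      thus False using low a b inJ by force
    qed
  qed auto
  have hlt: "h a < h b" if "f (a,0) < f (b,0)" "a \<noteq> b" for a b
  proof -
    have "h a \<le> h b" using that h_def by (auto simp: less_prod_def)
    moreover have "h a \<noteq> h b" using injh that by (auto dest: injD)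
    ultimately show ?thesis by simp
  qed
  have smo1: "strict_mono_on J1 h"
  proof (rule strict_mono_onI)
    fix a b assume "a \<in> J1" "b \<in> J1" "a < b"
    hence "f (a,0) < f (b,0)" using m1 inJ by (auto simp: less_prod_def)
    thus "h a < h b" using hlt \<open>a < b\<close> by simp
  qed
  have smo2: "strict_mono_on (-J1) h"
  proof (rule strict_mono_onI)
    fix a b assume "a \<in> -J1" "b \<in> -J1" "a < b"
    hence "f (a,0) < f (b,0)" using m2 inJ by (auto simp: less_prod_def)
    thus "h a < h b" using hlt \<open>a < b\<close> by simp
  qed
  have crh: "\<forall>a\<in>J1. \<forall>b\<in>-J1. h a > h b"
  proof (intro ballI)
    fix a b assume "a \<in> J1" "b \<in> -J1"
    hence "f (b,0) < f (a,0)" "a \<noteq> b" using cr inJ by auto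
    thus "h a > h b" using hlt by auto
  qed
  have "rotation_type h" unfolding rotation_type_def bij_def
    using injh surjh sec smo1 smo2 crh by blast
  thus ?thesis using pos ini by blast
qed



lemma fst_init: "initiates f h \<Longrightarrow> fst (f p) = h (fst p)"
proof -
  assume ini: "initiates f h"
  have "f p \<in> f ` vertical (fst p)" by (cases p) (auto simp: vertical_def)
  thus ?thesis using ini unfolding initiates_def vertical_def by auto
qed

lemma qz_rot:
  fixes f :: "qz \<Rightarrow> qz"
  assumes pos: "positive f" and ini: "initiates f h" and rot: "rotation_type h"
  shows "\<exists>I. rotform I f"
proof -
  obtain J1 J2 where sec: "is_section J1 J2" and s1: "strict_mono_on J1 h"
    and s2: "strict_mono_on J2 h" and cr: "\<forall>a\<in>J1. \<forall>b\<in>J2. h b < h a"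
    using rot unfolding rotation_type_def by auto
  have J2: "J2 = -J1" using sec unfolding is_section_def by auto
  have secl: "a < b" if "a \<in> J1" "b \<notin> J1" for a b using sec that J2 unfolding is_section_def by auto
  have fst_f: "fst (f p) = h (fst p)" for p using fst_init[OF ini] .
  have posz: "f (r,z) < f (r,z')" if "z < z'" for r z z'
    using pos that unfolding positive_def qz_less_eq by blast
  define I :: "qz set" where "I = {p. fst p \<in> J1}"
  have less_fst: "f p < f q" if "h (fst p) < h (fst q)" for p q
    using fst_f that by (simp add: less_prod_def)
  have mono_gen: "f p < f q" if "p < q" "fst p = fst q \<or> h (fst p) < h (fst q)" for p q
  proof (cases "fst p = fst q")
    case True
    hence "snd p < snd q" using that(1) by (auto simp: less_prod_def)
    thus ?thesis using posz[of "snd p" "snd q" "fst p"] True by (metis prod.collapse)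
  next
    case False thus ?thesis using that less_fst by auto
  qed
  have fle: "fst p \<le> fst q" if "p < q" for p q :: qz using that by (auto simp: less_prod_def)
  have low: "x \<in> I" if "x < y" "y \<in> I" for x y :: qz
  proof (rule ccontr)
    assume "x \<notin> I"
    hence "fst y < fst x" using secl that unfolding I_def by auto
    thus False using fle[OF that(1)] by simp
  qed
  have m1: "f x < f y" if "x < y" "x \<in> I" "y \<in> I" for x y :: qz
  proof -
    have "fst x = fst y \<or> fst x < fst y" using fle[OF that(1)] by auto
    hence "fst x = fst y \<or> h (fst x) < h (fst y)" using s1 that unfolding I_def
      by (auto dest: strict_mono_onD)
    thus ?thesis using mono_gen that by blast
  qed
  have m2: "f x < f y" if "x < y" "x \<notin> I" "y \<notin> I" for x y :: qz
  proof -
    have "fst x = fst y \<or> fst x < fst y" using fle[OF that(1)] by auto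
    hence "fst x = fst y \<or> h (fst x) < h (fst y)" using s2 that J2 unfolding I_def
      by (auto dest: strict_mono_onD)
    thus ?thesis using mono_gen that by blast
  qed
  have c: "f b < f a" if "a \<in> I" "b \<notin> I" for a b :: qz
    using cr that J2 less_fst unfolding I_def by auto
  have "rotform I f" unfolding rotform_def
    using low m1 m2 c by (auto intro!: strict_mono_onI)
  thus ?thesis by blast
qed

definition nq :: "qz \<Rightarrow> qz" where "nq p = (- fst p, - snd p)"

lemma nq_less: "nq p < nq q \<longleftrightarrow> q < p" by (auto simp: nq_def less_prod_def)
lemma nq_nq[simp]: "nq (nq p) = p" by (simp add: nq_def)
lemma bij_nq: "bij nq" unfolding bij_def inj_def surj_def by (metis nq_nq)
lemma nq_o_nq: "nq \<circ> (nq \<circ> g) = g" by (simp add: fun_eq_iff)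

lemma nq_cyc: assumes "distinct [a,b,c]" shows "cyc (nq a) (nq b) (nq c) \<longleftrightarrow> \<not> cyc a b c"
proof -
  have "cyc (nq a) (nq b) (nq c) \<longleftrightarrow> cyc c b a" unfolding cyc_def nq_less by auto
  also have "\<dots> \<longleftrightarrow> cyc a c b" unfolding cyc_def by auto
  also have "\<dots> \<longleftrightarrow> \<not> cyc a b c" using cyc_swap[OF assms] .
  finally show ?thesis .
qed

lemma pres_nq: assumes inj: "inj g" and p: "pres g \<or> revs g"
  shows "pres (nq \<circ> g) \<or> revs (nq \<circ> g)"
proof -
  have e: "cyc (nq (g x)) (nq (g y)) (nq (g z)) \<longleftrightarrow> \<not> cyc (g x) (g y) (g z)" if "distinct [x,y,z]" for x y z
  proof -
    have "distinct [g x, g y, g z]" using that inj by (auto simp: inj_eq)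
    thus ?thesis by (rule nq_cyc)
  qed
  show ?thesis using p e unfolding pres_def revs_def by auto
qed

lemma vert_nq: "nq ` vertical s = vertical (-s)"
proof
  show "nq ` vertical s \<subseteq> vertical (-s)" by (auto simp: nq_def vertical_def)
  show "vertical (-s) \<subseteq> nq ` vertical s"
  proof
    fix p assume "p \<in> vertical (-s)"
    hence "p = nq (s, - snd p)" by (cases p) (auto simp: nq_def vertical_def)
    moreover have "(s, - snd p) \<in> vertical s" by (simp add: vertical_def)
    ultimately show "p \<in> nq ` vertical s" by blast
  qed
qed

lemma init_nq: assumes "initiates f h" shows "initiates (nq \<circ> f) (uminus \<circ> h)"
proof -
  have "(nq \<circ> f) ` vertical a = vertical ((uminus \<circ> h) a)" for a
  proof -
    have "(nq \<circ> f) ` vertical a = nq ` (f ` vertical a)" by (simp add: image_comp)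
    also have "\<dots> = nq ` vertical (h a)" using assms unfolding initiates_def by simp
    also have "\<dots> = vertical ((uminus \<circ> h) a)" by (simp add: vert_nq)
    finally show ?thesis .
  qed
  thus ?thesis unfolding initiates_def systemic_def by blast
qed

lemma neg1:
  assumes pos: "positive f" and ini: "initiates f h" and rot: "rotation_type h"
  shows "negative (nq \<circ> f) \<and> initiates (nq \<circ> f) (uminus \<circ> h) \<and> reflection_type (uminus \<circ> h)"
proof (intro conjI)
  show i: "initiates (nq \<circ> f) (uminus \<circ> h)" by (rule init_nq[OF ini])
  show "negative (nq \<circ> f)" unfolding negative_def qz_less_eq
  proof (intro conjI allI impI)
    show "systemic (nq \<circ> f)" using i unfolding initiates_def by blast
    fix r and z z' :: int assume "z < z'"
    hence "f (r,z) < f (r,z')" using pos unfolding positive_def qz_less_eq by blast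
    thus "(nq \<circ> f) (r, z') < (nq \<circ> f) (r, z)" by (simp add: nq_less)
  qed
  obtain J1 J2 where sec: "is_section J1 J2" and s1: "strict_mono_on J1 h"
    and s2: "strict_mono_on J2 h" and cr: "\<forall>a\<in>J1. \<forall>b\<in>J2. h b < h a" and b: "bij h"
    using rot unfolding rotation_type_def by auto
  have "strict_antimono_on J1 (uminus \<circ> h)" "strict_antimono_on J2 (uminus \<circ> h)"
    using s1 s2 unfolding monotone_on_def by auto
  moreover have "\<forall>a\<in>J1. \<forall>b\<in>J2. (uminus \<circ> h) a < (uminus \<circ> h) b" using cr by auto
  moreover have "bij (uminus \<circ> h)" by (rule bij_comp[OF b bij_uminus])
  ultimately show "reflection_type (uminus \<circ> h)" unfolding reflection_type_def using sec by blast
qed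

lemma neg2:
  assumes neg: "negative g" and ini: "initiates g h" and rf: "reflection_type h"
  shows "positive (nq \<circ> g) \<and> initiates (nq \<circ> g) (uminus \<circ> h) \<and> rotation_type (uminus \<circ> h)"
proof (intro conjI)
  show i: "initiates (nq \<circ> g) (uminus \<circ> h)" by (rule init_nq[OF ini])
  show "positive (nq \<circ> g)" unfolding positive_def qz_less_eq
  proof (intro conjI allI impI)
    show "systemic (nq \<circ> g)" using i unfolding initiates_def by blast
    fix r and z z' :: int assume "z < z'"
    hence "g (r,z') < g (r,z)" using neg unfolding negative_def qz_less_eq by blast
    thus "(nq \<circ> g) (r, z) < (nq \<circ> g) (r, z')" by (simp add: nq_less)
  qed
  obtain J1 J2 where sec: "is_section J1 J2" and s1: "strict_antimono_on J1 h"
    and s2: "strict_antimono_on J2 h" and cr: "\<forall>a\<in>J1. \<forall>b\<in>J2. h a < h b" and b: "bij h"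
    using rf unfolding reflection_type_def by auto
  have "strict_mono_on J1 (uminus \<circ> h)" "strict_mono_on J2 (uminus \<circ> h)"
    using s1 s2 unfolding monotone_on_def by auto
  moreover have "\<forall>a\<in>J1. \<forall>b\<in>J2. (uminus \<circ> h) a > (uminus \<circ> h) b" using cr by auto
  moreover have "bij (uminus \<circ> h)" by (rule bij_comp[OF b bij_uminus])
  ultimately show "rotation_type (uminus \<circ> h)" unfolding rotation_type_def using sec by blast
qed

lemma inf_qz: "infinite (UNIV :: qz set)"
  by (simp add: finite_prod infinite_UNIV_int)

theorem mainTheorem10:
  shows "Gamma_Sep =
    {g. bij g \<and>
       ((positive g \<and> (\<exists>h. initiates g h \<and> rotation_type h)) \<or>
        (negative g \<and> (\<exists>h. initiates g h \<and> reflection_type h)))}"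
proof (intro set_eqI iffI; simp only: mem_Collect_eq)
  fix g :: "qz \<Rightarrow> qz"
  assume "g \<in> Gamma_Sep"
  hence b: "bij g" and S: "\<And>a b c d. sep a b c d \<longleftrightarrow> sep (g a) (g b) (g c) (g d)"
    unfolding Gamma_Sep_def Sep_eq by auto
  have inj: "inj g" using b bij_is_inj by blast
  have "pres g \<or> revs g" using sep_pres_revs[OF inj S inf_qz] by blast
  thus "bij g \<and> ((positive g \<and> (\<exists>h. initiates g h \<and> rotation_type h)) \<or>
        (negative g \<and> (\<exists>h. initiates g h \<and> reflection_type h)))"
  proof
    assume "pres g"
    then obtain I where "rotform I g" using pres_rotform[OF inj] by blast
    thus ?thesis using rot_qz[OF b] b by blast
  next
    assume rv: "revs g"
    have bf: "bij (nq \<circ> g)" using b bij_nq by (rule bij_comp)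
    have "pres (nq \<circ> g) \<or> revs (nq \<circ> g)" using pres_nq[OF inj] rv by blast
    moreover have "\<not> revs (nq \<circ> g) \<or> pres (nq \<circ> g)"
      using rv nq_cyc inj unfolding revs_def pres_def
      by (metis (no_types, lifting) comp_apply distinct_length_2_or_more distinct_singleton inj_eq)
    ultimately have "pres (nq \<circ> g)" by blast
    then obtain I where "rotform I (nq \<circ> g)" using pres_rotform bf bij_is_inj by blast
    then obtain h where "positive (nq \<circ> g)" "initiates (nq \<circ> g) h" "rotation_type h"
      using rot_qz[OF bf] by blast
    from neg1[OF this] show ?thesis using b nq_o_nq[of g] by metis
  qed
next
  fix g :: "qz \<Rightarrow> qz"
  assume H: "bij g \<and> ((positive g \<and> (\<exists>h. initiates g h \<and> rotation_type h)) \<or>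
        (negative g \<and> (\<exists>h. initiates g h \<and> reflection_type h)))"
  hence b: "bij g" by blast
  have inj: "inj g" using b bij_is_inj by blast
  have "pres g \<or> revs g"
  proof (cases "positive g \<and> (\<exists>h. initiates g h \<and> rotation_type h)")
    case True
    then obtain h where "positive g" "initiates g h" "rotation_type h" by blast
    then obtain I where "rotform I g" using qz_rot by blast
    thus ?thesis using rotform_pres by blast
  next
    case False
    then obtain h where "negative g" "initiates g h" "reflection_type h" using H by blast
    from neg2[OF this] obtain I where "rotform I (nq \<circ> g)" using qz_rot by blast
    hence p: "pres (nq \<circ> g)" using rotform_pres by blast
    have "inj (nq \<circ> g)" using inj bij_is_inj[OF bij_nq] by (rule inj_compose[rotated])
    from pres_nq[OF this] p have "pres (nq \<circ> (nq \<circ> g)) \<or> revs (nq \<circ> (nq \<circ> g))" by blast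
    thus ?thesis by (simp add: nq_o_nq)
  qed
  hence "sep a b c d \<longleftrightarrow> sep (g a) (g b) (g c) (g d)" for a b c d using pres_revs_sep[OF inj] by blast
  thus "g \<in> Gamma_Sep" unfolding Gamma_Sep_def Sep_eq using b by blast
qed


end
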